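(* Let $d\ge3$, $\gamma\in[1,2]$, $\rho_0>0$, and let $\rho$ be the Lane–Emden profile with central density $\rho_0$ on $[0,R_g)$. Then for all $r\in[0,R_g)$: if $\gamma\in[1,2)$, $\rho(r)\le\Big(\rho_0^{-(2-\gamma)}+\frac{2\pi}{d}\frac{2-\gamma}{\gamma}r^2\Big)^{-1/(2-\gamma)}$; if $\gamma=2$, $\rho(r)\le\exp\big(\ln\rho_0-\frac{2\pi}{d}\frac{1}{\gamma}r^2\big)=\rho_0e^{-\pi r^2/d}$. Equivalently, for $\gamma>1$ with $w=\rho^{\gamma-1}$, $w_0=\rho_0^{\gamma-1}$, $\alpha=1/(\gamma-1)$: $w(r)\le\big(w_0^{-(\alpha-1)}+\frac{2\pi}{d}\frac{2-\gamma}{\gamma}r^2\big)^{-1/(\alpha-1)}$ if $\alpha\ne1$ and $w(r)\le\exp\big(\ln w_0-\frac{2\pi}{d}\frac{\gamma-1}{\gamma}r^2\big)$ if $\alpha=1$; and for $\gamma=1$ with $h=\ln\rho$, $h_0=\ln\rho_0$: $h(r)\le-\ln\big(e^{-h_0}+\frac{2\pi}{d}r^2\big)$.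
   Context: Fix an integer $d\ge 3$ and $\gamma\in[1,2]$. For $\rho_0>0$, the (radial, gaseous) Lane–Emden profile with central density $\rho_0$ is the unique continuous function $\rho:[0,R_g)\to(0,\infty)$, defined on its maximal interval of existence $[0,R_g)$, $R_g\in(0,\infty]$, with $\rho(0)=\rho_0$ and, writing $m(r)=4\pi\int_0^r y^{d-1}\rho(y)\,dy$, $\frac{d}{dr}\big(\rho(r)^\gamma\big)=-\rho(r)\,m(r)/r^{d-1}$ for $0<r<R_g$ (equivalently: for $\gamma>1$, $w=\rho^{\gamma-1}$ satisfies $w'(r)=-4\pi\frac{\gamma-1}{\gamma}r^{1-d}\int_0^r y^{d-1}w(y)^{\alpha}dy$ with $\alpha=1/(\gamma-1)$; for $\gamma=1$, $h=\ln\rho$ satisfies $h'(r)=-4\pi r^{1-d}\int_0^r y^{d-1}e^{h(y)}dy$). *)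

theory Defs
  imports "HOL-Analysis.Analysis"
begin

definition le_mass :: "nat \<Rightarrow> (real \<Rightarrow> real) \<Rightarrow> real \<Rightarrow> real" where
  "le_mass d \<rho> r = 4 * pi * integral {0..r} (\<lambda>y. y ^ (d - 1) * \<rho> y)"

definition le_solution :: "nat \<Rightarrow> real \<Rightarrow> real \<Rightarrow> (real \<Rightarrow> real) \<Rightarrow> ereal \<Rightarrow> bool" where
  "le_solution d \<gamma> \<rho>0 \<rho> R \<longleftrightarrow>
     R > 0 \<and>
     continuous_on {r. 0 \<le> r \<and> ereal r < R} \<rho> \<and>
     (\<forall>r. 0 \<le> r \<and> ereal r < R \<longrightarrow> \<rho> r > 0) \<and>
     \<rho> 0 = \<rho>0 \<and>
     (\<forall>r. 0 < r \<and> ereal r < R \<longrightarrow>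
        ((\<lambda>s. \<rho> s powr \<gamma>) has_real_derivative
           (- \<rho> r * le_mass d \<rho> r / r ^ (d - 1))) (at r))"

text \<open>The Lane-Emden profile: a solution on its maximal interval of existence [0,Rg),
  i.e. it admits no extension to a solution on a strictly larger interval [0,R').\<close>
definition lane_emden_profile :: "nat \<Rightarrow> real \<Rightarrow> real \<Rightarrow> (real \<Rightarrow> real) \<Rightarrow> ereal \<Rightarrow> bool" where
  "lane_emden_profile d \<gamma> \<rho>0 \<rho> Rg \<longleftrightarrow>
     le_solution d \<gamma> \<rho>0 \<rho> Rg \<and>
     \<not> (\<exists>R' \<rho>'. R' > Rg \<and> le_solution d \<gamma> \<rho>0 \<rho>' R' \<and>
           (\<forall>r. 0 \<le> r \<and> ereal r < Rg \<longrightarrow> \<rho>' r = \<rho> r))"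

end

theory Submission
  imports Defs
begin

lemma int_pow: assumes "d \<ge> 1" "0 \<le> (b::real)"
  shows "((\<lambda>y. y^(d-1)) has_integral b^d / d) {0..b}"
proof -
  have "((\<lambda>y. y^(d-1)) has_integral (\<lambda>y. y^d/d) b - (\<lambda>y. y^d/d) 0) {0..b}"
  proof (rule fundamental_theorem_of_calculus)
    fix x :: real
    have "((\<lambda>y. y^d/d) has_real_derivative (real d * x^(d-1))/d) (at x)"
      using assms by (intro derivative_eq_intros) auto
    hence "((\<lambda>y. y^d/d) has_real_derivative x^(d-1)) (at x)"
      using assms by simp
    thus "((\<lambda>y. y^d/d) has_vector_derivative x^(d-1)) (at x within {0..b})"
      by (simp add: has_real_derivative_iff_has_vector_derivative has_vector_derivative_at_within)
  qed (use assms in auto)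
  thus ?thesis using assms by (simp add: zero_power)
qed

locale le_setup =
  fixes d :: nat and \<gamma> :: real and \<rho> :: "real \<Rightarrow> real" and r :: real
  assumes d: "d \<ge> 1" and \<gamma>: "\<gamma> \<ge> 1" and r: "0 \<le> r"
    and cont: "continuous_on {0..r} \<rho>"
    and pos: "\<And>s. 0 \<le> s \<Longrightarrow> s \<le> r \<Longrightarrow> \<rho> s > 0"
    and der: "\<And>s. 0 < s \<Longrightarrow> s < r \<Longrightarrow>
       ((\<lambda>s. \<rho> s powr \<gamma>) has_real_derivative (- \<rho> s * le_mass d \<rho> s / s^(d-1))) (at s)"
begin

lemma integrable: assumes "0 \<le> s" "s \<le> r"
  shows "(\<lambda>y. y^(d-1) * \<rho> y) integrable_on {0..s}"
proof -
  have "continuous_on {0..s} \<rho>" by (rule continuous_on_subset[OF cont]) (use assms in auto)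
  hence "continuous_on {0..s} (\<lambda>y. y^(d-1) * \<rho> y)" by (intro continuous_intros)
  thus ?thesis by (rule integrable_continuous_interval)
qed

lemma mass_nonneg: assumes "0 \<le> s" "s \<le> r" shows "le_mass d \<rho> s \<ge> 0"
  unfolding le_mass_def using integrable[OF assms] pos assms
  by (intro mult_nonneg_nonneg integral_nonneg) (auto intro!: mult_nonneg_nonneg less_imp_le)

lemma mono: assumes "0 \<le> a" "a \<le> b" "b \<le> r" shows "\<rho> b \<le> \<rho> a"
proof -
  have "(\<lambda>s. \<rho> s powr \<gamma>) b \<le> (\<lambda>s. \<rho> s powr \<gamma>) a"
  proof (rule DERIV_nonpos_imp_decreasing_open[OF assms(2)])
    fix x assume x: "a < x" "x < b"
    have "- \<rho> x * le_mass d \<rho> x / x^(d-1) \<le> 0"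
      using pos[of x] mass_nonneg[of x] x assms
      by (intro divide_nonpos_nonneg) (auto simp: mult_nonneg_nonneg)
    thus "\<exists>y. ((\<lambda>s. \<rho> s powr \<gamma>) has_real_derivative y) (at x) \<and> y \<le> 0"
      using der[of x] x assms by auto
  next
    have "continuous_on {a..b} \<rho>" by (rule continuous_on_subset[OF cont]) (use assms in auto)
    moreover have "\<And>s. s \<in> {a..b} \<Longrightarrow> \<rho> s \<noteq> 0"
      using pos assms by (metis atLeastAtMost_iff order.trans less_irrefl)
    ultimately show "continuous_on {a..b} (\<lambda>s. \<rho> s powr \<gamma>)"
      by (intro continuous_intros) auto
  qed
  hence "\<rho> b powr \<gamma> \<le> \<rho> a powr \<gamma>" by simp
  thus ?thesis using pos[of a] pos[of b] assms \<gamma>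
    by (metis linorder_not_le order.trans powr_less_mono2 less_eq_real_def zero_less_one le_less_trans not_less)
qed

lemma mass_bound: assumes "0 \<le> s" "s \<le> r"
  shows "le_mass d \<rho> s \<ge> 4 * pi * \<rho> s * s^d / d"
proof -
  have i: "((\<lambda>y. y^(d-1) * \<rho> s) has_integral s^d / d * \<rho> s) {0..s}"
    using int_pow[OF d assms(1)] by (rule has_integral_mult_left)
  have "integral {0..s} (\<lambda>y. y^(d-1) * \<rho> s) \<le> integral {0..s} (\<lambda>y. y^(d-1) * \<rho> y)"
    using i integrable[OF assms] mono assms
    by (intro integral_le) (auto intro!: mult_left_mono)
  moreover have "integral {0..s} (\<lambda>y. y^(d-1) * \<rho> s) = s^d / d * \<rho> s"
    using i by (rule integral_unique)
  ultimately have "s^d / d * \<rho> s \<le> integral {0..s} (\<lambda>y. y^(d-1) * \<rho> y)"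
    by linarith
  hence "4*pi*(s^d / d * \<rho> s) \<le> 4*pi*integral {0..s} (\<lambda>y. y^(d-1) * \<rho> y)"
    by (intro mult_left_mono) auto
  thus ?thesis unfolding le_mass_def by (simp add: algebra_simps)
qed

end

theorem mainTheorem6:
  fixes d :: nat and \<gamma> \<rho>0 :: real and \<rho> :: "real \<Rightarrow> real" and Rg :: ereal and r :: real
  assumes "d \<ge> 3" and "1 \<le> \<gamma>" and "\<gamma> \<le> 2" and "\<rho>0 > 0"
    and "lane_emden_profile d \<gamma> \<rho>0 \<rho> Rg"
    and "0 \<le> r" and "ereal r < Rg"
  shows "(\<gamma> < 2 \<longrightarrow> \<rho> r \<le> (\<rho>0 powr (-(2 - \<gamma>)) + (2 * pi / d) * ((2 - \<gamma>) / \<gamma>) * r\<^sup>2)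
                          powr (-1 / (2 - \<gamma>)))
       \<and> (\<gamma> = 2 \<longrightarrow> \<rho> r \<le> exp (ln \<rho>0 - (2 * pi / d) * (1 / \<gamma>) * r\<^sup>2))"
proof -
  note a = assms(5)[unfolded lane_emden_profile_def le_solution_def]
  have sub: "\<And>s. s \<le> r \<Longrightarrow> ereal s < Rg" using assms(7) by (meson ereal_less_eq(3) order.strict_trans1)
  have contD: "continuous_on {s. 0 \<le> s \<and> ereal s < Rg} \<rho>" using a by blast
  have r0: "\<rho> 0 = \<rho>0" using a by blast
  interpret le_setup d \<gamma> \<rho> r
  proof
    show "1 \<le> d" using assms(1) by simp
    show "1 \<le> \<gamma>" by fact
    show "0 \<le> r" by fact
    show "continuous_on {0..r} \<rho>" by (rule continuous_on_subset[OF contD]) (auto intro: sub)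
    show "\<And>s. 0 \<le> s \<Longrightarrow> s \<le> r \<Longrightarrow> \<rho> s > 0" using a sub by blast
    show "\<And>s. 0 < s \<Longrightarrow> s < r \<Longrightarrow>
       ((\<lambda>s. \<rho> s powr \<gamma>) has_real_derivative (- \<rho> s * le_mass d \<rho> s / s^(d-1))) (at s)"
      using a sub by (meson less_imp_le)
  qed
  have dpos: "real d > 0" using assms(1) by simp
  have key: "4 * pi * x / d \<le> le_mass d \<rho> x / (\<rho> x * x^(d-1))" if x: "0 < x" "x < r" for x
  proof -
    have px: "\<rho> x > 0" using pos x by auto
    have "x^d = x * x^(d-1)" using assms(1) by (metis Suc_diff_le le_trans one_le_numeral power_Suc diff_Suc_1)
    hence "4 * pi * x / d * (\<rho> x * x^(d-1)) = 4 * pi * \<rho> x * x^d / d" by simp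
    also have "\<dots> \<le> le_mass d \<rho> x" using mass_bound[of x] x by auto
    finally show ?thesis using px x by (simp add: pos_le_divide_eq)
  qed
  have cpos: "\<And>s. s \<in> {0..r} \<Longrightarrow> \<rho> s powr \<gamma> > 0" using pos by (simp add: less_imp_neq[symmetric])
  have nz: "\<And>s. s \<in> {0..r} \<Longrightarrow> \<rho> s \<noteq> 0" using pos by (simp add: less_imp_neq[symmetric])
  have cont2: "continuous_on {0..r} (\<lambda>s. \<rho> s powr \<gamma>)"
    using cont nz by (intro continuous_intros) auto
  show ?thesis
  proof (intro conjI impI)
    assume g2: "\<gamma> < 2"
    define c where "c = (2 - \<gamma>) / \<gamma>"
    have c: "c > 0" using g2 assms(2) by (simp add: c_def)
    define F where "F s = (\<rho> s powr \<gamma>) powr (-c) - (2 * pi / d) * ((2 - \<gamma>) / \<gamma>) * s^2" for s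
    have "F 0 \<le> F r"
    proof (rule DERIV_nonneg_imp_increasing_open[OF r])
      fix x assume x: "0 < x" "x < r"
      have px: "\<rho> x > 0" using pos x by auto
      have D: "(F has_real_derivative
          (-c) * (\<rho> x powr \<gamma>) powr (-c - of_nat 1) * (- \<rho> x * le_mass d \<rho> x / x^(d-1))
          - (2 * pi / d) * ((2 - \<gamma>) / \<gamma>) * (2 * x)) (at x)"
      proof -
        define g where "g = (\<lambda>s. \<rho> s powr \<gamma>)"
        have G: "(g has_real_derivative (- \<rho> x * le_mass d \<rho> x / x^(d-1))) (at x)"
          unfolding g_def using der x by blast
        have H: "((\<lambda>s. g s powr (-c)) has_real_derivative
            (-c) * (g x) powr (-c - of_nat 1) * (- \<rho> x * le_mass d \<rho> x / x^(d-1))) (at x)"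
          by (rule DERIV_fun_powr[OF G]) (use px in \<open>simp add: g_def\<close>)
        have P: "((\<lambda>s. (2 * pi / d) * ((2 - \<gamma>) / \<gamma>) * s^2) has_real_derivative
             (2 * pi / d) * ((2 - \<gamma>) / \<gamma>) * (2 * x)) (at x)"
          using dpos assms(2) by (auto intro!: derivative_eq_intros)
        show ?thesis using DERIV_diff[OF H P] unfolding F_def g_def by simp
      qed
      have e: "(\<rho> x powr \<gamma>) powr (-c - of_nat 1) = 1 / (\<rho> x * \<rho> x)"
      proof -
        have "\<gamma> * (-c - 1) = -2" using assms(2) by (simp add: c_def field_simps)
        hence "(\<rho> x powr \<gamma>) powr (-c - of_nat 1) = \<rho> x powr (-2)" by (simp add: powr_powr)
        also have "\<dots> = 1 / (\<rho> x * \<rho> x)" using px by (simp add: powr_minus_divide power2_eq_square)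
        finally show ?thesis .
      qed
      have "(-c) * (\<rho> x powr \<gamma>) powr (-c - of_nat 1) * (- \<rho> x * le_mass d \<rho> x / x^(d-1))
          - (2 * pi / d) * ((2 - \<gamma>) / \<gamma>) * (2 * x)
          = c * (le_mass d \<rho> x / (\<rho> x * x^(d-1)) - 4 * pi * x / d)"
        unfolding e using px x dpos assms(2) by (simp add: c_def field_simps)
      also have "\<dots> \<ge> 0" using key[OF x] c by simp
      finally show "\<exists>y. (F has_real_derivative y) (at x) \<and> 0 \<le> y" using D by blast
    next
      show "continuous_on {0..r} F" unfolding F_def
        using cont2 cpos cont by (intro continuous_intros) (auto simp: less_imp_neq[symmetric])
    qed
    hence "\<rho>0 powr (-(2 - \<gamma>)) + (2 * pi / d) * ((2 - \<gamma>) / \<gamma>) * r\<^sup>2 \<le> \<rho> r powr (-(2 - \<gamma>))"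
      using assms(2) by (simp add: F_def r0 powr_powr c_def)
    moreover have "0 < \<rho>0 powr (-(2 - \<gamma>)) + (2 * pi / d) * ((2 - \<gamma>) / \<gamma>) * r\<^sup>2"
      using assms(2,4) g2 by (intro add_pos_nonneg) auto
    ultimately have "(\<rho> r powr (-(2 - \<gamma>))) powr (-1 / (2 - \<gamma>)) \<le>
       (\<rho>0 powr (-(2 - \<gamma>)) + (2 * pi / d) * ((2 - \<gamma>) / \<gamma>) * r\<^sup>2) powr (-1 / (2 - \<gamma>))"
      using g2 by (intro powr_mono2') auto
    moreover have "(\<rho> r powr (-(2 - \<gamma>))) powr (-1 / (2 - \<gamma>)) = \<rho> r"
    proof -
      have "-(2 - \<gamma>) * (-1 / (2 - \<gamma>)) = 1" using g2 by (simp add: field_simps)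
      thus ?thesis using g2 pos[of r] r by (simp only: powr_powr) simp
    qed
    ultimately show "\<rho> r \<le> (\<rho>0 powr (-(2 - \<gamma>)) + (2 * pi / d) * ((2 - \<gamma>) / \<gamma>) * r\<^sup>2)
                          powr (-1 / (2 - \<gamma>))" by simp
  next
    assume g2: "\<gamma> = 2"
    define F where "F s = ln (\<rho> s powr \<gamma>) + (2 * pi / d) * s^2" for s
    have "F r \<le> F 0"
    proof (rule DERIV_nonpos_imp_decreasing_open[OF r])
      fix x assume x: "0 < x" "x < r"
      have px: "\<rho> x > 0" using pos x by auto
      have D: "(F has_real_derivative
          (- \<rho> x * le_mass d \<rho> x / x^(d-1)) / (\<rho> x powr \<gamma>) + (2 * pi / d) * (2 * x)) (at x)"
      proof -
        define g where "g = (\<lambda>s. \<rho> s powr \<gamma>)"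
        have G: "(g has_real_derivative (- \<rho> x * le_mass d \<rho> x / x^(d-1))) (at x)"
          unfolding g_def using der x by blast
        have gp: "g x > 0" using px by (simp add: g_def)
        have H: "((\<lambda>s. ln (g s)) has_real_derivative
            (- \<rho> x * le_mass d \<rho> x / x^(d-1)) / g x) (at x)"
          by (rule derivative_eq_intros G gp | simp)+
        have P: "((\<lambda>s. (2 * pi / d) * s^2) has_real_derivative (2 * pi / d) * (2 * x)) (at x)"
          using dpos by (auto intro!: derivative_eq_intros)
        show ?thesis using DERIV_add[OF H P] unfolding F_def g_def by simp
      qed
      have "(- \<rho> x * le_mass d \<rho> x / x^(d-1)) / (\<rho> x powr \<gamma>) + (2 * pi / d) * (2 * x)
          = 4 * pi * x / d - le_mass d \<rho> x / (\<rho> x * x^(d-1))"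
        using px x g2 by (simp add: field_simps power2_eq_square)
      also have "\<dots> \<le> 0" using key[OF x] by simp
      finally show "\<exists>y. (F has_real_derivative y) (at x) \<and> y \<le> 0" using D by blast
    next
      show "continuous_on {0..r} F" unfolding F_def
        using cont2 cpos cont by (intro continuous_intros) (auto simp: less_imp_neq[symmetric])
    qed
    hence "2 * ln (\<rho> r) + (2 * pi / d) * r\<^sup>2 \<le> 2 * ln \<rho>0"
      using g2 pos[of r] r assms(4) by (simp add: F_def r0 ln_powr ln_realpow)
    hence "ln (\<rho> r) \<le> ln \<rho>0 - (2 * pi / d) * (1 / \<gamma>) * r\<^sup>2" using g2 by simp
    hence "exp (ln (\<rho> r)) \<le> exp (ln \<rho>0 - (2 * pi / d) * (1 / \<gamma>) * r\<^sup>2)" by simp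
    thus "\<rho> r \<le> exp (ln \<rho>0 - (2 * pi / d) * (1 / \<gamma>) * r\<^sup>2)" using pos[of r] r by simp
  qed
qed

end
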